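(* Let $X$ be a proper, path connected metric space, let $S$ be a discrete subset of $X$, let $x_0\in S$, and let $n$ be an integer with $2\le n\le \#(S)$. Then every continuous path in $X$ from $x_0$ to a point of $B_n(x_0)$ intersects $B_{n-1}(x_0)$.
   Context: $(X,d)$ is a metric space. It is proper if for every $x\in X$ the function $d(x,\cdot)$ is a proper map (in particular every closed ball is compact). A subset $S\subseteq X$ is discrete if every compact subset of $X$ contains only finitely many points of $S$. For $x\in X$ and $r>0$ write $N_r(x)=\{y\in X: d(x,y)<r\}$ and $C_r(x)=\{y\in X: d(x,y)=r\}$; $\#(\cdot)$ denotes cardinality. For $x_0\in S$, a positive integer $n\le\#(S)$, and $x\in X$ with $r=d(x,x_0)$, define: $x\in B_n(x_0)$ iff $\#(N_r(x)\cap S)=m$ and $\#(C_r(x)\cap S)=\ell$ for some integers $m\ge 0$, $\ell\ge 1$ with $m+1\le n\le m+\ell$. *)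

theory Defs
  imports "HOL-Analysis.Analysis"
begin

text \<open>The metric space X is the whole carrier (UNIV) of a metric_space type.\<close>

definition proper_metric :: "'a::metric_space itself \<Rightarrow> bool" where
  "proper_metric _ \<longleftrightarrow>
     (\<forall>x::'a. \<forall>K::real set. compact K \<longrightarrow> compact {y::'a. dist x y \<in> K})"

definition discrete_subset :: "'a::metric_space set \<Rightarrow> bool" where
  "discrete_subset S \<longleftrightarrow> (\<forall>K. compact K \<longrightarrow> finite (K \<inter> S))"

text \<open>B_n(x0): with r = d(x,x0), N_r(x) = ball x r, C_r(x) = sphere x r.\<close>
definition B_set :: "'a::metric_space set \<Rightarrow> 'a \<Rightarrow> nat \<Rightarrow> 'a set" where
  "B_set S x0 n = {x. let r = dist x x0 in
     \<exists>m l. finite (ball x r \<inter> S) \<and> card (ball x r \<inter> S) = m \<and>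
           finite (sphere x r \<inter> S) \<and> card (sphere x r \<inter> S) = l \<and>
           l \<ge> 1 \<and> m + 1 \<le> n \<and> n \<le> m + l}"

end

theory Submission
  imports Defs
begin

lemma open_from_ev:
  assumes "\<forall>x\<in>U. eventually (\<lambda>y. y \<in> U) (nhds x)"
  shows "open U"
proof (rule open_subopen[THEN iffD2], intro ballI)
  fix x assume x: "x \<in> U"
  have "eventually (\<lambda>y. y \<in> U) (nhds x)" using assms x by (rule bspec)
  then have "\<exists>T. open T \<and> x \<in> T \<and> (\<forall>y\<in>T. y \<in> U)"
    by (simp only: eventually_nhds)
  then obtain T where T: "open T" "x \<in> T" "\<forall>y\<in>T. y \<in> U" by (elim exE conjE)
  have "T \<subseteq> U" using T(3) by blast
  then show "\<exists>T. open T \<and> x \<in> T \<and> T \<subseteq> U" using T(1,2) by (intro exI conjI)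
qed

lemma fin_cb:
  fixes S :: "'a::metric_space set"
  assumes "proper_metric TYPE('a)" "discrete_subset S"
  shows "finite (cball x e \<inter> S)"
proof -
  have "compact {y::'a. dist x y \<in> {0..e}}"
    using assms(1) unfolding proper_metric_def by blast
  moreover have "{y::'a. dist x y \<in> {0..e}} = cball x e" by (auto simp: cball_def)
  ultimately show ?thesis using assms(2) unfolding discrete_subset_def by auto
qed

lemma usc:
  fixes S :: "'a::metric_space set"
  assumes "proper_metric TYPE('a)" "discrete_subset S"
  shows "\<forall>\<^sub>F y in nhds x. cball y (dist y x0) \<inter> S \<subseteq> cball x (dist x x0) \<inter> S"
proof -
  define Q where "Q = cball x (dist x x0 + 2) \<inter> S - cball x (dist x x0)"
  have fQ: "finite Q" unfolding Q_def using fin_cb[OF assms] by auto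
  have "\<forall>s\<in>Q. \<forall>\<^sub>F y in nhds x. 0 < dist y s - dist y x0"
  proof
    fix s assume "s \<in> Q"
    then have "0 < dist x s - dist x x0" unfolding Q_def by auto
    moreover have "((\<lambda>y. dist y s - dist y x0) \<longlongrightarrow> dist x s - dist x x0) (nhds x)"
      by (intro tendsto_intros filterlim_ident)
    ultimately show "\<forall>\<^sub>F y in nhds x. 0 < dist y s - dist y x0"
      by (rule order_tendstoD(1)[rotated])
  qed
  then have e1: "\<forall>\<^sub>F y in nhds x. \<forall>s\<in>Q. 0 < dist y s - dist y x0"
    by (rule eventually_ball_finite[OF fQ])
  have e2: "\<forall>\<^sub>F y in nhds x. dist y x < 1"
    unfolding eventually_nhds_metric by (intro exI[of _ 1]) auto
  show ?thesis
  proof (rule eventually_mono[OF eventually_conj[OF e1 e2]], safe)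
    fix y s assume H: "\<forall>s\<in>Q. 0 < dist y s - dist y x0" "dist y x < 1"
      "s \<in> cball y (dist y x0)" "s \<in> S"
    have t1: "dist x s \<le> dist x y + dist y s" by (rule dist_triangle)
    have t2: "dist y x0 \<le> dist y x + dist x x0" by (rule dist_triangle)
    have t3: "dist x y = dist y x" by (rule dist_commute)
    have t4: "dist y s \<le> dist y x0" using H(3) by simp
    have le2: "dist x s \<le> dist x x0 + 2" using t1 t2 t3 t4 H(2) by linarith
    have "s \<notin> Q"
    proof
      assume "s \<in> Q"
      then have "0 < dist y s - dist y x0" using H(1) by blast
      then show False using t4 by linarith
    qed
    moreover have "s \<in> cball x (dist x x0 + 2)" using le2 by simp
    ultimately show "s \<in> cball x (dist x x0)" using H(4) unfolding Q_def by blast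
  qed
qed

lemma lsc:
  fixes S :: "'a::metric_space set"
  assumes "proper_metric TYPE('a)" "discrete_subset S"
  shows "\<forall>\<^sub>F y in nhds x. ball x (dist x x0) \<inter> S \<subseteq> ball y (dist y x0) \<inter> S"
proof -
  define Q where "Q = ball x (dist x x0) \<inter> S"
  have fQ: "finite Q" unfolding Q_def using fin_cb[OF assms, of x "dist x x0"]
    by (meson Int_mono ball_subset_cball finite_subset order_refl)
  have "\<forall>s\<in>Q. \<forall>\<^sub>F y in nhds x. 0 < dist y x0 - dist y s"
  proof
    fix s assume "s \<in> Q"
    then have "0 < dist x x0 - dist x s" unfolding Q_def by auto
    moreover have "((\<lambda>y. dist y x0 - dist y s) \<longlongrightarrow> dist x x0 - dist x s) (nhds x)"
      by (intro tendsto_intros filterlim_ident)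
    ultimately show "\<forall>\<^sub>F y in nhds x. 0 < dist y x0 - dist y s"
      by (rule order_tendstoD(1)[rotated])
  qed
  then have e1: "\<forall>\<^sub>F y in nhds x. \<forall>s\<in>Q. 0 < dist y x0 - dist y s"
    by (rule eventually_ball_finite[OF fQ])
  show ?thesis
  proof (rule eventually_mono[OF e1], rule subsetI)
    fix y s assume H: "\<forall>s\<in>Q. 0 < dist y x0 - dist y s" and s: "s \<in> ball x (dist x x0) \<inter> S"
    then have "s \<in> Q" unfolding Q_def by blast
    then have "0 < dist y x0 - dist y s" using H by blast
    then have "dist y s < dist y x0" by linarith
    then show "s \<in> ball y (dist y x0) \<inter> S" using s by simp
  qed
qed

theorem mainTheorem3:
  fixes S :: "'a::metric_space set" and x0 :: 'a and n :: nat
    and g :: "real \<Rightarrow> 'a"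
  assumes "proper_metric TYPE('a)"
    and "path_connected (UNIV :: 'a set)"
    and "discrete_subset S"
    and "x0 \<in> S"
    and "2 \<le> n"
    and "infinite S \<or> n \<le> card S"
    and "path g" and "pathstart g = x0" and "pathfinish g \<in> B_set S x0 n"
  shows "path_image g \<inter> B_set S x0 (n - 1) \<noteq> {}"
proof
  assume empty: "path_image g \<inter> B_set S x0 (n - 1) = {}"
  define F where "F x = card (cball x (dist x x0) \<inter> S)" for x
  define H where "H x = card (ball x (dist x x0) \<inter> S)" for x
  have fc: "finite (cball x e \<inter> S)" for x e using fin_cb[OF assms(1,3)] .
  have fb: "finite (ball x e \<inter> S)" for x e
    using fc[of x e] by (meson Int_mono ball_subset_cball finite_subset order_refl)
  have fs: "finite (sphere x e \<inter> S)" for x e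
    using fc[of x e] by (meson Int_mono sphere_cball finite_subset order_refl)
  have HF: "H x \<le> F x" for x unfolding H_def F_def
    by (intro card_mono[OF fc]) (auto)
  have split: "F x = H x + card (sphere x (dist x x0) \<inter> S)" for x
  proof -
    have "cball x (dist x x0) \<inter> S = (ball x (dist x x0) \<inter> S) \<union> (sphere x (dist x x0) \<inter> S)"
      by auto
    moreover have "(ball x (dist x x0) \<inter> S) \<inter> (sphere x (dist x x0) \<inter> S) = {}" by auto
    ultimately show ?thesis unfolding F_def H_def
      by (simp add: card_Un_disjoint[OF fb fs])
  qed
  have Bchar: "x \<in> B_set S x0 k \<longleftrightarrow> H x < k \<and> k \<le> F x" for x k
  proof -
    have "x \<in> B_set S x0 k \<longleftrightarrow> (1 \<le> card (sphere x (dist x x0) \<inter> S) \<and> H x + 1 \<le> k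
       \<and> k \<le> H x + card (sphere x (dist x x0) \<inter> S))"
      unfolding B_set_def H_def Let_def using fb fs by simp
    then show ?thesis using split[of x] by linarith
  qed
  define U where "U = {x. F x \<le> n - 2}"
  define V where "V = {x. n - 1 \<le> H x}"
  have oU: "open U"
  proof (rule open_from_ev, rule ballI)
    fix x assume "x \<in> U"
    show "\<forall>\<^sub>F y in nhds x. y \<in> U"
    proof (rule eventually_mono[OF usc[OF assms(1,3), where x=x and x0=x0]])
      fix y assume "cball y (dist y x0) \<inter> S \<subseteq> cball x (dist x x0) \<inter> S"
      then have "F y \<le> F x" unfolding F_def by (intro card_mono[OF fc])
      then show "y \<in> U" using `x \<in> U` unfolding U_def by auto
    qed
  qed
  have oV: "open V"
  proof (rule open_from_ev, rule ballI)
    fix x assume "x \<in> V"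
    show "\<forall>\<^sub>F y in nhds x. y \<in> V"
    proof (rule eventually_mono[OF lsc[OF assms(1,3), where x=x and x0=x0]])
      fix y assume "ball x (dist x x0) \<inter> S \<subseteq> ball y (dist y x0) \<inter> S"
      then have "H x \<le> H y" unfolding H_def by (intro card_mono[OF fb])
      then show "y \<in> V" using `x \<in> V` unfolding V_def by auto
    qed
  qed
  have disj: "U \<inter> V \<inter> path_image g = {}"
  proof (rule equals0I)
    fix x assume "x \<in> U \<inter> V \<inter> path_image g"
    then have "F x \<le> n - 2" "n - 1 \<le> H x" unfolding U_def V_def by auto
    then show False using HF[of x] assms(5) by linarith
  qed
  have cov: "path_image g \<subseteq> U \<union> V"
  proof
    fix x assume "x \<in> path_image g"
    then have "x \<notin> B_set S x0 (n - 1)" using empty by auto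
    then show "x \<in> U \<union> V" using assms(5) unfolding Bchar U_def V_def by auto
  qed
  have x0p: "x0 \<in> path_image g" using assms(8) by (metis pathstart_in_path_image)
  have H0: "H x0 = 0" unfolding H_def by simp
  have "x0 \<notin> V" unfolding V_def using H0 assms(5) by simp
  then have x0U: "x0 \<in> U" using cov x0p by blast
  have pf: "pathfinish g \<in> path_image g" by (rule pathfinish_in_path_image)
  have "n \<le> F (pathfinish g)" using assms(9) unfolding Bchar by blast
  then have "pathfinish g \<notin> U" using assms(5) unfolding U_def by simp
  then have pfV: "pathfinish g \<in> V" using cov pf by blast
  have ne: "U \<inter> path_image g \<noteq> {}" "V \<inter> path_image g \<noteq> {}"
    using x0U x0p pfV pf by blast+
  have "U \<inter> path_image g = {} \<or> V \<inter> path_image g = {}"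
    by (rule connectedD[OF connected_path_image[OF assms(7)] oU oV disj cov])
  then show False using ne by simp
qed

end
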